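(* Let $\omega\in\mathbb{F}_{q^n}$ and let $\mathbb{F}_{q^k}=\mathbb{F}_q(\omega)$ be the smallest subfield of $\mathbb{F}_{q^n}$ containing $\omega$. Then the smallest subplane (over a subfield $\mathbb{F}_{q^j}$, $j\mid n$) of $\mathrm{PG}(2,q^n)$ that is secant to $l_\infty$ and contains $\pi_{\omega,0}$ is an $\mathbb{F}_{q^k}$-subplane.
   Context: Points of $\mathrm{PG}(2,q^n)$ are written $(a,b,c)_{\mathbb{F}_{q^n}}$; $l_\infty$ is the line $c=0$. For $j\mid n$, an $\mathbb{F}_{q^j}$-subplane is a set $\{(su+tv+wz)_{\mathbb{F}_{q^n}}:(s,t,w)\in\mathbb{F}_{q^j}^3\setminus\{0\}\}$ for $\mathbb{F}_{q^n}$-independent $u,v,z\in\mathbb{F}_{q^n}^3$; it is secant to $l_\infty$ if it meets $l_\infty$ in $q^j+1$ points. For $\omega\in\mathbb{F}_{q^n}$, $\pi_{\omega,0}=\{(s,u,u\omega+t)_{\mathbb{F}_{q^n}}:(s,t,u)\in\mathbb{F}_q^3\setminus\{0\}\}$. *)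

theory Defs
  imports Main
begin

definition is_subfield :: "'a::field set \<Rightarrow> bool" where
  "is_subfield K \<longleftrightarrow> 0 \<in> K \<and> 1 \<in> K \<and>
     (\<forall>x\<in>K. \<forall>y\<in>K. x + y \<in> K \<and> x * y \<in> K) \<and>
     (\<forall>x\<in>K. - x \<in> K) \<and> (\<forall>x\<in>K. x \<noteq> 0 \<longrightarrow> inverse x \<in> K)"

definition gen_subfield :: "'a::field set \<Rightarrow> 'a \<Rightarrow> 'a set" where
  "gen_subfield F \<omega> = \<Inter>{K. is_subfield K \<and> F \<subseteq> K \<and> \<omega> \<in> K}"

type_synonym 'a vec3 = "'a \<times> 'a \<times> 'a"

definition vsmult :: "'a::field \<Rightarrow> 'a vec3 \<Rightarrow> 'a vec3" where
  "vsmult c v = (c * fst v, c * fst (snd v), c * snd (snd v))"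

definition vadd :: "'a::field vec3 \<Rightarrow> 'a vec3 \<Rightarrow> 'a vec3" where
  "vadd v w = (fst v + fst w, fst (snd v) + fst (snd w), snd (snd v) + snd (snd w))"

text \<open>The projective point (v) of PG(2,F) for the ambient field: the 1-dimensional span of v.\<close>
definition pt :: "'a::field vec3 \<Rightarrow> 'a vec3 set" where
  "pt v = {vsmult c v | c. True}"

definition lin_indep3 :: "'a::field vec3 \<Rightarrow> 'a vec3 \<Rightarrow> 'a vec3 \<Rightarrow> bool" where
  "lin_indep3 u v z \<longleftrightarrow> (\<forall>a b c. vadd (vadd (vsmult a u) (vsmult b v)) (vsmult c z) = (0,0,0)
      \<longrightarrow> a = 0 \<and> b = 0 \<and> c = 0)"

definition subplane :: "'a::field set \<Rightarrow> 'a vec3 \<Rightarrow> 'a vec3 \<Rightarrow> 'a vec3 \<Rightarrow> 'a vec3 set set" where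
  "subplane K u v z = {pt (vadd (vadd (vsmult s u) (vsmult t v)) (vsmult w z)) | s t w.
      s \<in> K \<and> t \<in> K \<and> w \<in> K \<and> (s, t, w) \<noteq> (0, 0, 0)}"

definition is_subplane_over :: "'a::field set \<Rightarrow> 'a vec3 set set \<Rightarrow> bool" where
  "is_subplane_over K S \<longleftrightarrow> (\<exists>u v z. lin_indep3 u v z \<and> S = subplane K u v z)"

definition l_inf :: "'a::field vec3 set set" where
  "l_inf = {pt (a, b, 0) | a b. (a, b) \<noteq> (0, 0)}"

definition secant :: "'a::field set \<Rightarrow> 'a vec3 set set \<Rightarrow> bool" where
  "secant K S \<longleftrightarrow> card (S \<inter> l_inf) = card K + 1"

definition pi_omega0 :: "'a::field set \<Rightarrow> 'a \<Rightarrow> 'a vec3 set set" where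
  "pi_omega0 F \<omega> = {pt (s, u, u * \<omega> + t) | s t u.
      s \<in> F \<and> t \<in> F \<and> u \<in> F \<and> (s, t, u) \<noteq> (0, 0, 0)}"

end

theory Submission
  imports Defs
begin

definition lc :: "'a::field vec3 \<Rightarrow> 'a vec3 \<Rightarrow> 'a vec3 \<Rightarrow> 'a vec3 \<Rightarrow> 'a vec3" where
  "lc u v z a = vadd (vadd (vsmult (fst a) u) (vsmult (fst (snd a)) v)) (vsmult (snd (snd a)) z)"

definition det3 :: "'a::field vec3 \<Rightarrow> 'a vec3 \<Rightarrow> 'a vec3 \<Rightarrow> 'a" where
  "det3 x y z = fst x * (fst (snd y) * snd (snd z) - snd (snd y) * fst (snd z))
              - fst (snd x) * (fst y * snd (snd z) - snd (snd y) * fst z)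
              + snd (snd x) * (fst y * fst (snd z) - fst (snd y) * fst z)"

lemma lc_add: "lc u v z (vadd a b) = vadd (lc u v z a) (lc u v z b)"
  by (simp add: lc_def vadd_def vsmult_def algebra_simps)
lemma lc_smult: "lc u v z (vsmult k a) = vsmult k (lc u v z a)"
  by (simp add: lc_def vadd_def vsmult_def algebra_simps)
lemma lc_comp: "lc (lc u v z a1) (lc u v z a2) (lc u v z a3) x = lc u v z (lc a1 a2 a3 x)"
  by (simp add: lc_def vadd_def vsmult_def algebra_simps)
lemma lc_smult_vecs: "lc (vsmult c1 a1) (vsmult c2 a2) (vsmult c3 a3) (x1,x2,x3) = lc a1 a2 a3 (c1*x1, c2*x2, c3*x3)"
  by (simp add: lc_def vadd_def vsmult_def algebra_simps)
lemma det3_mult: "det3 (lc u v z a1) (lc u v z a2) (lc u v z a3) = det3 u v z * det3 a1 a2 a3"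
  unfolding det3_def lc_def vadd_def vsmult_def by simp algebra
lemma det3_smult: "det3 (vsmult c1 a1) (vsmult c2 a2) (vsmult c3 a3) = c1*c2*c3*det3 a1 a2 a3"
  by (simp add: det3_def vsmult_def algebra_simps)
lemma det3_lc1: "det3 (lc y1 y2 y3 k) y2 y3 = fst k * det3 y1 y2 y3"
  unfolding det3_def lc_def vadd_def vsmult_def by simp algebra
lemma det3_lc2: "det3 y1 (lc y1 y2 y3 k) y3 = fst (snd k) * det3 y1 y2 y3"
  unfolding det3_def lc_def vadd_def vsmult_def by simp algebra
lemma det3_lc3: "det3 y1 y2 (lc y1 y2 y3 k) = snd (snd k) * det3 y1 y2 y3"
  unfolding det3_def lc_def vadd_def vsmult_def by simp algebra
lemma cramer: "vsmult (det3 a1 a2 a3) b = lc a1 a2 a3 (det3 b a2 a3, det3 a1 b a3, det3 a1 a2 b)"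
  unfolding det3_def lc_def vadd_def vsmult_def by (simp add: prod_eq_iff) algebra

definition inK3 :: "'a::field set \<Rightarrow> 'a vec3 \<Rightarrow> bool" where
  "inK3 K a \<longleftrightarrow> fst a \<in> K \<and> fst (snd a) \<in> K \<and> snd (snd a) \<in> K"

lemma sf_0: "is_subfield K \<Longrightarrow> 0 \<in> K" unfolding is_subfield_def by blast
lemma sf_1: "is_subfield K \<Longrightarrow> 1 \<in> K" unfolding is_subfield_def by blast
lemma sf_add: "is_subfield K \<Longrightarrow> x \<in> K \<Longrightarrow> y \<in> K \<Longrightarrow> x + y \<in> K" unfolding is_subfield_def by blast
lemma sf_mult: "is_subfield K \<Longrightarrow> x \<in> K \<Longrightarrow> y \<in> K \<Longrightarrow> x * y \<in> K" unfolding is_subfield_def by blast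
lemma sf_uminus: "is_subfield K \<Longrightarrow> x \<in> K \<Longrightarrow> - x \<in> K" unfolding is_subfield_def by blast
lemma sf_diff: "is_subfield K \<Longrightarrow> x \<in> K \<Longrightarrow> y \<in> K \<Longrightarrow> x - y \<in> K"
  using sf_add sf_uminus by (metis diff_conv_add_uminus)
lemma sf_inverse: "is_subfield K \<Longrightarrow> x \<in> K \<Longrightarrow> inverse x \<in> K"
  by (cases "x = 0") (auto simp: is_subfield_def)
lemma sf_div: "is_subfield K \<Longrightarrow> x \<in> K \<Longrightarrow> y \<in> K \<Longrightarrow> x / y \<in> K"
  by (simp add: divide_inverse sf_mult sf_inverse)

lemmas sf_closed = sf_0 sf_1 sf_add sf_mult sf_uminus sf_diff sf_inverse sf_div

lemma det3_K: "is_subfield K \<Longrightarrow> inK3 K a \<Longrightarrow> inK3 K b \<Longrightarrow> inK3 K c \<Longrightarrow> det3 a b c \<in> K"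
  unfolding det3_def inK3_def by (simp add: sf_closed)

lemma lc_K: "is_subfield K \<Longrightarrow> inK3 K a \<Longrightarrow> inK3 K b \<Longrightarrow> inK3 K c \<Longrightarrow> inK3 K x \<Longrightarrow> inK3 K (lc a b c x)"
  unfolding lc_def inK3_def vadd_def vsmult_def by (simp add: sf_closed)

lemma pt_smult: "c \<noteq> 0 \<Longrightarrow> pt (vsmult c x) = pt x"
proof -
  assume c: "c \<noteq> 0"
  have 1: "vsmult a (vsmult c x) = vsmult (a*c) x" for a
    by (simp add: vsmult_def mult.assoc)
  have 2: "vsmult a x = vsmult (a / c) (vsmult c x)" for a
    using c by (simp add: vsmult_def)
  show ?thesis unfolding pt_def using 1 2 by blast
qed

lemma vsmult_0: "vsmult c x = (0,0,0) \<longleftrightarrow> c = 0 \<or> x = (0,0,0)"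
  by (cases x) (auto simp: vsmult_def)

lemma pt_eq: "pt x = pt y \<Longrightarrow> x \<noteq> (0,0,0) \<Longrightarrow> \<exists>c. c \<noteq> 0 \<and> x = vsmult c y"
proof -
  assume e: "pt x = pt y" and x: "x \<noteq> (0,0,0)"
  have "x \<in> pt x" unfolding pt_def by (rule CollectI, rule exI[of _ 1]) (simp add: vsmult_def)
  then obtain c where "x = vsmult c y" using e unfolding pt_def by auto
  with x show ?thesis using vsmult_0 by blast
qed

lemma lc_inj: assumes "lin_indep3 u v z" "lc u v z a = lc u v z b" shows "a = b"
proof -
  obtain a1 a2 a3 where a: "a = (a1,a2,a3)" by (cases a)
  obtain b1 b2 b3 where b: "b = (b1,b2,b3)" by (cases b)
  obtain u1 u2 u3 where u: "u = (u1,u2,u3)" by (cases u)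
  obtain v1 v2 v3 where v: "v = (v1,v2,v3)" by (cases v)
  obtain z1 z2 z3 where z: "z = (z1,z2,z3)" by (cases z)
  have e: "a1*u1 + a2*v1 + a3*z1 = b1*u1 + b2*v1 + b3*z1"
    "a1*u2 + a2*v2 + a3*z2 = b1*u2 + b2*v2 + b3*z2"
    "a1*u3 + a2*v3 + a3*z3 = b1*u3 + b2*v3 + b3*z3"
    using assms(2) unfolding a b u v z lc_def vadd_def vsmult_def by simp_all
  have "vadd (vadd (vsmult (a1 - b1) u) (vsmult (a2 - b2) v)) (vsmult (a3 - b3) z) = (0,0,0)"
    unfolding u v z vadd_def vsmult_def using e by (simp add: algebra_simps)
  hence "a1 - b1 = 0 \<and> a2 - b2 = 0 \<and> a3 - b3 = 0"
    using assms(1) unfolding lin_indep3_def by blast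
  thus ?thesis unfolding a b by simp
qed

lemma lc_zero: "lc u v z (0,0,0) = (0,0,0)" by (simp add: lc_def vadd_def vsmult_def)

lemma lc_nz: "lin_indep3 u v z \<Longrightarrow> a \<noteq> (0,0,0) \<Longrightarrow> lc u v z a \<noteq> (0,0,0)"
  using lc_inj[of u v z a "(0,0,0)"] lc_zero[of u v z] by auto

lemma det_nz_inj: "det3 e1 e2 e3 \<noteq> 0 \<Longrightarrow> lc e1 e2 e3 x = (0,0,0) \<Longrightarrow> x = (0,0,0)"
proof -
  assume d: "det3 e1 e2 e3 \<noteq> 0" and h: "lc e1 e2 e3 x = (0,0,0)"
  have z1: "det3 (0,0,0) b c = 0" "det3 a (0,0,0) c = 0" "det3 a b (0,0,0) = 0" for a b c :: "'a vec3"
    by (simp_all add: det3_def)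
  have "fst x * det3 e1 e2 e3 = 0" using det3_lc1[of e1 e2 e3 x] h z1 by simp
  moreover have "fst (snd x) * det3 e1 e2 e3 = 0" using det3_lc2[of e1 e2 e3 x] h z1 by simp
  moreover have "snd (snd x) * det3 e1 e2 e3 = 0" using det3_lc3[of e1 e2 e3 x] h z1 by simp
  ultimately show ?thesis using d by (simp add: prod_eq_iff)
qed

lemma subplane_lc: "subplane K u v z = {pt (lc u v z a) | a. inK3 K a \<and> a \<noteq> (0,0,0)}"
proof (intro set_eqI iffI)
  fix P assume "P \<in> subplane K u v z"
  then obtain s t w where h: "P = pt (vadd (vadd (vsmult s u) (vsmult t v)) (vsmult w z))"
    "s \<in> K" "t \<in> K" "w \<in> K" "(s, t, w) \<noteq> (0, 0, 0)" unfolding subplane_def by blast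
  show "P \<in> {pt (lc u v z a) | a. inK3 K a \<and> a \<noteq> (0,0,0)}"
    apply (rule CollectI, rule exI[of _ "(s,t,w)"]) using h by (simp add: lc_def inK3_def)
next
  fix P assume "P \<in> {pt (lc u v z a) | a. inK3 K a \<and> a \<noteq> (0,0,0)}"
  then obtain a where h0: "P = pt (lc u v z a)" "inK3 K a" "a \<noteq> (0,0,0)" by blast
  obtain s t w where "a = (s,t,w)" by (cases a)
  with h0 have h: "P = pt (lc u v z (s,t,w))" "inK3 K (s,t,w)" "(s,t,w) \<noteq> (0,0,0)" by auto
  show "P \<in> subplane K u v z" unfolding subplane_def
    apply (rule CollectI, rule exI[of _ s], rule exI[of _ t], rule exI[of _ w]) using h by (simp add: lc_def inK3_def)
qed

lemma det3_sm1: "det3 (vsmult c x) y z = c * det3 x y z"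
  by (simp add: det3_def vsmult_def algebra_simps)

lemma key_eq:
  assumes "e1 = lc u v z (vsmult c1 a1)" "e2 = lc u v z (vsmult c2 a2)" "e3 = lc u v z (vsmult c3 a3)" "c4 \<noteq> 0"
  shows "lc e1 e2 e3 (s,t,w) = vsmult c4 (lc u v z (lc a1 a2 a3 (c1*s/c4, c2*t/c4, c3*w/c4)))"
proof -
  have "lc e1 e2 e3 (s,t,w) = lc u v z (lc (vsmult c1 a1) (vsmult c2 a2) (vsmult c3 a3) (s,t,w))"
    unfolding assms(1-3) by (rule lc_comp)
  also have "\<dots> = lc u v z (lc a1 a2 a3 (c1*s, c2*t, c3*w))" by (simp add: lc_smult_vecs)
  also have "(c1*s, c2*t, c3*w) = vsmult c4 (c1*s/c4, c2*t/c4, c3*w/c4)"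
    using assms(4) by (simp add: vsmult_def)
  finally show ?thesis by (simp add: lc_smult)
qed

lemma frame:
  fixes K :: "'a::field set"
  assumes K: "is_subfield K" and li: "lin_indep3 u v z" and d: "det3 e1 e2 e3 \<noteq> 0"
    and h1: "pt e1 \<in> subplane K u v z" and h2: "pt e2 \<in> subplane K u v z"
    and h3: "pt e3 \<in> subplane K u v z" and h4: "pt (lc e1 e2 e3 (1,1,1)) \<in> subplane K u v z"
  shows "subplane K u v z = subplane K e1 e2 e3"
proof -
  have getc: "\<exists>a c. inK3 K a \<and> a \<noteq> (0,0,0) \<and> c \<noteq> 0 \<and> e = lc u v z (vsmult c a)"
    if "pt e \<in> subplane K u v z" "e \<noteq> (0,0,0)" for e
  proof -
    from that(1) obtain a where a: "pt e = pt (lc u v z a)" "inK3 K a" "a \<noteq> (0,0,0)"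
      unfolding subplane_lc by blast
    with pt_eq that(2) obtain c where "c \<noteq> 0" "e = vsmult c (lc u v z a)" by blast
    hence "c \<noteq> 0" "e = lc u v z (vsmult c a)" by (simp_all add: lc_smult)
    thus ?thesis using a by blast
  qed
  have z1: "det3 (0,0,0) b c = 0" "det3 a (0,0,0) c = 0" "det3 a b (0,0,0) = 0" for a b c :: "'a vec3"
    by (simp_all add: det3_def)
  have n1: "e1 \<noteq> (0,0,0)" using d z1(1) by metis
  have n2: "e2 \<noteq> (0,0,0)" using d z1(2) by metis
  have n3: "e3 \<noteq> (0,0,0)" using d z1(3) by metis
  have n4: "lc e1 e2 e3 (1,1,1) \<noteq> (0,0,0)" using det_nz_inj[OF d] by fastforce
  obtain a1 c1 where A1: "inK3 K a1" "a1 \<noteq> (0,0,0)" "c1 \<noteq> 0" "e1 = lc u v z (vsmult c1 a1)"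
    using getc[OF h1 n1] by blast
  obtain a2 c2 where A2: "inK3 K a2" "a2 \<noteq> (0,0,0)" "c2 \<noteq> 0" "e2 = lc u v z (vsmult c2 a2)"
    using getc[OF h2 n2] by blast
  obtain a3 c3 where A3: "inK3 K a3" "a3 \<noteq> (0,0,0)" "c3 \<noteq> 0" "e3 = lc u v z (vsmult c3 a3)"
    using getc[OF h3 n3] by blast
  obtain a4 c4 where A4: "inK3 K a4" "a4 \<noteq> (0,0,0)" "c4 \<noteq> 0" "lc e1 e2 e3 (1,1,1) = lc u v z (vsmult c4 a4)"
    using getc[OF h4 n4] by blast
  have "det3 e1 e2 e3 = det3 u v z * (c1*c2*c3*det3 a1 a2 a3)"
    unfolding A1(4) A2(4) A3(4) det3_mult det3_smult ..
  hence D: "det3 a1 a2 a3 \<noteq> 0" using d by auto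
  have DK: "det3 a1 a2 a3 \<in> K" using det3_K K A1 A2 A3 by blast
  have "lc e1 e2 e3 (1,1,1) = vsmult c4 (lc u v z (lc a1 a2 a3 (c1*1/c4, c2*1/c4, c3*1/c4)))"
    using key_eq[OF A1(4) A2(4) A3(4) A4(3)] .
  also have "\<dots> = lc u v z (vsmult c4 (lc a1 a2 a3 (c1/c4, c2/c4, c3/c4)))" by (simp add: lc_smult)
  finally have "lc u v z (vsmult c4 a4) = lc u v z (vsmult c4 (lc a1 a2 a3 (c1/c4, c2/c4, c3/c4)))"
    using A4(4) by simp
  hence "vsmult c4 a4 = vsmult c4 (lc a1 a2 a3 (c1/c4, c2/c4, c3/c4))" by (rule lc_inj[OF li])
  hence a4: "a4 = lc a1 a2 a3 (c1/c4, c2/c4, c3/c4)" using A4(3)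
    by (simp add: vsmult_def prod_eq_iff)
  have "c1/c4 = det3 a4 a2 a3 / det3 a1 a2 a3" using D unfolding a4 det3_lc1 by simp
  hence r1: "c1/c4 \<in> K" using sf_div[OF K det3_K[OF K A4(1) A2(1) A3(1)] DK] by simp
  have "c2/c4 = det3 a1 a4 a3 / det3 a1 a2 a3" using D unfolding a4 det3_lc2 by simp
  hence r2: "c2/c4 \<in> K" using sf_div[OF K det3_K[OF K A1(1) A4(1) A3(1)] DK] by simp
  have "c3/c4 = det3 a1 a2 a4 / det3 a1 a2 a3" using D unfolding a4 det3_lc3 by simp
  hence r3: "c3/c4 \<in> K" using sf_div[OF K det3_K[OF K A1(1) A2(1) A4(1)] DK] by simp
  have KE: "lc e1 e2 e3 (s,t,w) = vsmult c4 (lc u v z (lc a1 a2 a3 (c1*s/c4, c2*t/c4, c3*w/c4)))" for s t w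
    using key_eq[OF A1(4) A2(4) A3(4) A4(3)] .
  show ?thesis
  proof (intro equalityI subsetI)
    fix P assume "P \<in> subplane K e1 e2 e3"
    then obtain x where x: "P = pt (lc e1 e2 e3 x)" "inK3 K x" "x \<noteq> (0,0,0)"
      unfolding subplane_lc by blast
    obtain s t w where xs: "x = (s,t,w)" by (cases x)
    define b where "b = lc a1 a2 a3 (c1*s/c4, c2*t/c4, c3*w/c4)"
    have eqc: "(c1*s/c4, c2*t/c4, c3*w/c4) = (s*(c1/c4), t*(c2/c4), w*(c3/c4))" by simp
    have stw: "s \<in> K" "t \<in> K" "w \<in> K" using x(2) xs by (simp_all add: inK3_def)
    have inK: "inK3 K (s*(c1/c4), t*(c2/c4), w*(c3/c4))"
      unfolding inK3_def fst_conv snd_conv by (intro conjI sf_mult[OF K] stw r1 r2 r3)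
    have bK: "inK3 K b" unfolding b_def eqc by (rule lc_K[OF K A1(1) A2(1) A3(1) inK])
    have eqP: "lc e1 e2 e3 x = vsmult c4 (lc u v z b)" unfolding xs b_def KE ..
    have "b \<noteq> (0,0,0)"
    proof
      assume "b = (0,0,0)"
      hence "lc e1 e2 e3 x = (0,0,0)" unfolding eqP by (simp add: vsmult_def lc_zero)
      thus False using det_nz_inj[OF d] x(3) by blast
    qed
    moreover have "P = pt (lc u v z b)" unfolding x(1) eqP pt_smult[OF A4(3)] ..
    ultimately show "P \<in> subplane K u v z" unfolding subplane_lc using bK by blast
  next
    fix P assume "P \<in> subplane K u v z"
    then obtain b where b: "P = pt (lc u v z b)" "inK3 K b" "b \<noteq> (0,0,0)"
      unfolding subplane_lc by blast
    define D' where "D' = det3 a1 a2 a3"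
    define x1 where "x1 = det3 b a2 a3 / D'"
    define x2 where "x2 = det3 a1 b a3 / D'"
    define x3 where "x3 = det3 a1 a2 b / D'"
    have "vsmult D' b = lc a1 a2 a3 (det3 b a2 a3, det3 a1 b a3, det3 a1 a2 b)"
      unfolding D'_def by (rule cramer)
    hence "vsmult (1/D') (vsmult D' b) = lc a1 a2 a3 (vsmult (1/D') (det3 b a2 a3, det3 a1 b a3, det3 a1 a2 b))"
      by (simp add: lc_smult)
    hence bx: "b = lc a1 a2 a3 (x1, x2, x3)"
      using D unfolding D'_def x1_def x2_def x3_def by (simp add: vsmult_def prod_eq_iff)
    have xK: "x1 \<in> K" "x2 \<in> K" "x3 \<in> K" unfolding x1_def x2_def x3_def D'_def
      using sf_div[OF K det3_K[OF K b(2) A2(1) A3(1)] DK] sf_div[OF K det3_K[OF K A1(1) b(2) A3(1)] DK]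
        sf_div[OF K det3_K[OF K A1(1) A2(1) b(2)] DK] by simp_all
    define y where "y = (x1 * inverse (c1/c4), x2 * inverse (c2/c4), x3 * inverse (c3/c4))"
    have yK: "inK3 K y" unfolding y_def inK3_def fst_conv snd_conv by (intro conjI sf_mult[OF K] sf_inverse[OF K] xK r1 r2 r3)
    have "(c1 * fst y / c4, c2 * fst (snd y) / c4, c3 * snd (snd y) / c4) = (x1, x2, x3)"
      unfolding y_def using A1(3) A2(3) A3(3) A4(3) by (simp add: field_simps)
    hence eqy: "lc e1 e2 e3 y = vsmult c4 (lc u v z b)"
      using KE[of "fst y" "fst (snd y)" "snd (snd y)"] bx by simp
    have "y \<noteq> (0,0,0)"
    proof
      assume "y = (0,0,0)"
      hence "vsmult c4 (lc u v z b) = (0,0,0)" using eqy by (simp add: lc_zero)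
      thus False using vsmult_0 A4(3) lc_nz[OF li b(3)] by blast
    qed
    moreover have "P = pt (lc e1 e2 e3 y)" unfolding eqy pt_smult[OF A4(3)] b(1) ..
    ultimately show "P \<in> subplane K e1 e2 e3" unfolding subplane_lc using yK by blast
  qed
qed

definition kclosed :: "'a::field set \<Rightarrow> 'a set \<Rightarrow> bool" where
  "kclosed K W \<longleftrightarrow> 0 \<in> W \<and> (\<forall>x\<in>W. \<forall>y\<in>W. x + y \<in> W) \<and> (\<forall>c\<in>K. \<forall>x\<in>W. c * x \<in> W)"

lemma count_aux:
  fixes K V :: "'a::{field,finite} set"
  assumes K: "is_subfield K" and V: "kclosed K V"
  shows "\<forall>W. kclosed K W \<and> W \<subseteq> V \<and> card V - card W = m \<longrightarrow> (\<exists>d. card V = card W * card K ^ d)"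
proof (induction m rule: less_induct)
  case (less m)
  show ?case
  proof (intro allI impI)
    fix W assume a: "kclosed K W \<and> W \<subseteq> V \<and> card V - card W = m"
    hence W: "kclosed K W" and WV: "W \<subseteq> V" and m: "card V - card W = m" by auto
    show "\<exists>d. card V = card W * card K ^ d"
    proof (cases "W = V")
      case True thus ?thesis by (intro exI[of _ 0]) simp
    next
      case False
      then obtain x where x: "x \<in> V" "x \<notin> W" using WV by blast
      define W' where "W' = (\<lambda>(w,c). w + c * x) ` (W \<times> K)"
      have m1: "-1 \<in> K" using K by (simp add: sf_closed)
      have Wneg: "w' - w \<in> W" if "w \<in> W" "w' \<in> W" for w w'
      proof -
        have "(-1) * w \<in> W" using W m1 that unfolding kclosed_def by blast
        hence "w' + (-1) * w \<in> W" using W that unfolding kclosed_def by blast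
        thus ?thesis by simp
      qed
      have inj: "inj_on (\<lambda>(w,c). w + c * x) (W \<times> K)"
      proof (rule inj_onI, clarify)
        fix w c w' c' assume h: "w \<in> W" "c \<in> K" "w' \<in> W" "c' \<in> K" "w + c * x = w' + c' * x"
        show "w = w' \<and> c = c'"
        proof (cases "c = c'")
          case True thus ?thesis using h by simp
        next
          case False
          have "(c - c') * x = w' - w" using h(5) by (simp add: algebra_simps)
          hence "x = inverse (c - c') * (w' - w)" using False by (simp add: field_simps)
          moreover have "inverse (c - c') \<in> K" using K h by (simp add: sf_closed)
          ultimately have "x \<in> W" using Wneg[OF h(1) h(3)] W unfolding kclosed_def by simp
          thus ?thesis using x by simp
        qed
      qed
      have cW': "card W' = card W * card K"
        unfolding W'_def using card_image[OF inj] by (simp add: card_cartesian_product)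
      have W'V: "W' \<subseteq> V"
      proof
        fix y assume "y \<in> W'"
        then obtain w c where "y = w + c * x" "w \<in> W" "c \<in> K" unfolding W'_def by auto
        thus "y \<in> V" using V WV x unfolding kclosed_def by blast
      qed
      have kW': "kclosed K W'"
        unfolding kclosed_def
      proof (intro conjI ballI)
        have "0 = 0 + 0 * x" by simp
        thus "0 \<in> W'" unfolding W'_def using W K sf_0 unfolding kclosed_def by force
      next
        fix y1 y2 assume "y1 \<in> W'" "y2 \<in> W'"
        then obtain w1 c1 w2 c2 where h: "y1 = w1 + c1 * x" "w1 \<in> W" "c1 \<in> K"
          "y2 = w2 + c2 * x" "w2 \<in> W" "c2 \<in> K" unfolding W'_def by auto
        have "y1 + y2 = (w1 + w2) + (c1 + c2) * x" using h by (simp add: algebra_simps)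
        moreover have "w1 + w2 \<in> W" "c1 + c2 \<in> K" using h W K sf_add unfolding kclosed_def by auto
        ultimately show "y1 + y2 \<in> W'" unfolding W'_def by force
      next
        fix k y assume "k \<in> K" "y \<in> W'"
        then obtain w c where h: "y = w + c * x" "w \<in> W" "c \<in> K" unfolding W'_def by auto
        have "k * y = k * w + (k * c) * x" using h by (simp add: algebra_simps)
        moreover have "k * w \<in> W" "k * c \<in> K" using h W K sf_mult \<open>k \<in> K\<close> unfolding kclosed_def by auto
        ultimately show "k * y \<in> W'" unfolding W'_def by force
      qed
      have "W \<subseteq> W'"
      proof
        fix w assume "w \<in> W"
        moreover have "w = w + 0 * x" by simp
        ultimately show "w \<in> W'" unfolding W'_def using K sf_0 by force
      qed
      moreover have "x \<in> W'"
      proof -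
        have "x = 0 + 1 * x" by simp
        thus ?thesis unfolding W'_def using K sf_1 W unfolding kclosed_def by force
      qed
      ultimately have "W \<subset> W'" using x by blast
      hence lt: "card W < card W'" by (simp add: psubset_card_mono)
      have "card W' \<le> card V" using W'V by (simp add: card_mono)
      hence "card V - card W' < m" using lt m by linarith
      then obtain d where "card V = card W' * card K ^ d" using less kW' W'V by blast
      hence "card V = card W * card K ^ Suc d" using cW' by simp
      thus ?thesis by blast
    qed
  qed
qed

lemma count_sub:
  fixes K V :: "'a::{field,finite} set"
  assumes K: "is_subfield K" and V: "kclosed K V"
  shows "\<exists>d. card V = card K ^ d"
proof -
  have "kclosed K {0}" unfolding kclosed_def by simp
  moreover have "{0} \<subseteq> V" using V unfolding kclosed_def by simp
  ultimately show ?thesis using count_aux[OF K V] by fastforce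
qed

lemma sf_Inter: "(\<And>K. K \<in> KK \<Longrightarrow> is_subfield K) \<Longrightarrow> is_subfield (\<Inter>KK)"
  unfolding is_subfield_def by blast

lemma gen_props:
  assumes "is_subfield F"
  shows "is_subfield (gen_subfield F \<omega>)" "F \<subseteq> gen_subfield F \<omega>" "\<omega> \<in> gen_subfield F \<omega>"
    "\<And>K. is_subfield K \<Longrightarrow> F \<subseteq> K \<Longrightarrow> \<omega> \<in> K \<Longrightarrow> gen_subfield F \<omega> \<subseteq> K"
  unfolding gen_subfield_def by (auto intro: sf_Inter)

lemma lc_e: "lc (1,0,0) (0,1,\<omega>) (0,0,1) (s,t,w) = (s, t, t*\<omega> + w)"
  by (simp add: lc_def vadd_def vsmult_def)

lemma li_e: "lin_indep3 (1,0,0) (0,1,\<omega>) (0,0,1::'a::field)"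
  unfolding lin_indep3_def vadd_def vsmult_def by auto

lemma det_e: "det3 (1,0,0) (0,1,\<omega>) (0,0,1::'a::field) = 1"
  by (simp add: det3_def)

lemma S_e: "subplane K (1,0,0) (0,1,\<omega>) (0,0,1) =
   {pt (s, t, t*\<omega> + w) | s t w. s \<in> K \<and> t \<in> K \<and> w \<in> K \<and> (s,t,w) \<noteq> (0,0,0)}"
  unfolding subplane_def using lc_e[of \<omega>] unfolding lc_def by simp

lemma linf_iff: "x \<noteq> (0,0,0) \<Longrightarrow> pt x \<in> l_inf \<longleftrightarrow> snd (snd x) = 0"
proof
  assume x: "x \<noteq> (0,0,0)" and "pt x \<in> l_inf"
  then obtain a b where "pt x = pt (a,b,0)" unfolding l_inf_def by blast
  with pt_eq x obtain c where "x = vsmult c (a,b,0)" by blast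
  thus "snd (snd x) = 0" by (simp add: vsmult_def)
next
  assume x: "x \<noteq> (0,0,0)" and h: "snd (snd x) = 0"
  obtain a b c where xe: "x = (a,b,c)" by (cases x)
  with h x have "x = (a,b,0)" "(a,b) \<noteq> (0,0)" by auto
  thus "pt x \<in> l_inf" unfolding l_inf_def by blast
qed

lemma pi_mem: "s \<in> F \<Longrightarrow> t \<in> F \<Longrightarrow> u \<in> F \<Longrightarrow> (s,t,u) \<noteq> (0,0,0) \<Longrightarrow> pt (s,u,u*\<omega>+t) \<in> pi_omega0 F \<omega>"
  unfolding pi_omega0_def by blast

lemma pi_sub: "F \<subseteq> L \<Longrightarrow> pi_omega0 F \<omega> \<subseteq> subplane L (1,0,0) (0,1,\<omega>) (0,0,1)"
  unfolding S_e pi_omega0_def by blast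

lemma subplane_mono: "L \<subseteq> K \<Longrightarrow> subplane L u v z \<subseteq> subplane K u v z"
  unfolding subplane_def by blast

lemma card_ge2: "is_subfield (K::'a::{field,finite} set) \<Longrightarrow> card K \<ge> 2"
proof -
  assume K: "is_subfield K"
  have "{0,1} \<subseteq> K" using K by (simp add: sf_closed)
  hence "card {0::'a,1} \<le> card K" by (intro card_mono) simp_all
  thus ?thesis by simp
qed

lemma secant_e:
  fixes L :: "'a::{field,finite} set"
  assumes L: "is_subfield L" and w: "\<omega> \<in> L"
  shows "secant L (subplane L (1,0,0) (0,1,\<omega>) (0,0,1))"
proof -
  let ?S = "subplane L (1,0,0) (0,1,\<omega>) (0,0,1)"
  let ?f = "\<lambda>s. pt (s, 1::'a, 0)"
  have eq: "?S \<inter> l_inf = insert (pt (1,0,0)) (?f ` L)"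
  proof (intro equalityI subsetI)
    fix P assume PP: "P \<in> ?S \<inter> l_inf"
    hence "P \<in> ?S" by blast
    then obtain s t u where h0: "P = pt (s, t, t*\<omega> + u)" "s \<in> L" "t \<in> L" "u \<in> L" "(s,t,u) \<noteq> (0,0,0)"
      unfolding S_e by blast
    have h: "P = pt (s, t, t*\<omega> + u)" "s \<in> L" "t \<in> L" "u \<in> L" "(s,t,u) \<noteq> (0,0,0)" "P \<in> l_inf"
      using h0 PP by auto
    have nz: "(s, t, t*\<omega> + u) \<noteq> (0,0,0)" using h(5) by auto
    have z: "t*\<omega> + u = 0" using linf_iff[OF nz] h(1,6) by simp
    show "P \<in> insert (pt (1,0,0)) (?f ` L)"
    proof (cases "t = 0")
      case True
      hence "u = 0" "s \<noteq> 0" using z h(5) by auto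
      hence "(s, t, t*\<omega> + u) = vsmult s (1,0,0)" using True by (simp add: vsmult_def)
      thus ?thesis using h(1) pt_smult[OF \<open>s \<noteq> 0\<close>] by simp
    next
      case False
      hence "(s, t, t*\<omega> + u) = vsmult t (s/t,1,0)" using z by (simp add: vsmult_def)
      hence "P = ?f (s/t)" using h(1) pt_smult False by simp
      moreover have "s/t \<in> L" using L h by (simp add: sf_closed)
      ultimately show ?thesis by blast
    qed
  next
    fix P assume "P \<in> insert (pt (1,0,0)) (?f ` L)"
    then consider "P = pt (1,0,0)" | s where "s \<in> L" "P = pt (s,1,0)" by blast
    thus "P \<in> ?S \<inter> l_inf"
    proof cases
      case 1
      have "P \<in> ?S" unfolding S_e 1
        by (rule CollectI, rule exI[of _ 1], rule exI[of _ 0], rule exI[of _ 0]) (simp add: sf_closed L)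
      moreover have "P \<in> l_inf" using 1 linf_iff[of "(1,0,0)"] by simp
      ultimately show ?thesis by blast
    next
      case 2
      have "P \<in> ?S" unfolding S_e 2(2)
        by (rule CollectI, rule exI[of _ s], rule exI[of _ 1], rule exI[of _ "-\<omega>"]) (simp add: sf_closed L w 2(1))
      moreover have "P \<in> l_inf" using 2 linf_iff[of "(s,1,0)"] by simp
      ultimately show ?thesis by blast
    qed
  qed
  have notin: "pt (1,0,0) \<notin> ?f ` L"
  proof
    assume "pt (1,0,0) \<in> ?f ` L"
    then obtain s where e: "pt (1,0,0) = pt (s,1::'a,0)" by blast
    have "(1::'a,0::'a,0::'a) \<noteq> (0,0,0)" by simp
    with pt_eq[OF e] obtain c where "(1::'a,0::'a,0::'a) = vsmult c (s,1,0)" by blast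
    thus False by (auto simp: vsmult_def)
  qed
  have inj: "inj_on ?f L"
  proof (rule inj_onI)
    fix s s' assume e: "?f s = ?f s'"
    have "(s,1::'a,0::'a) \<noteq> (0,0,0)" by simp
    with pt_eq[OF e] obtain c where "(s,1::'a,0::'a) = vsmult c (s',1,0)" by blast
    thus "s = s'" by (simp add: vsmult_def)
  qed
  show ?thesis unfolding secant_def eq using notin card_image[OF inj] by simp
qed

theorem lemma3p3:
  fixes F :: "'a::{field,finite} set" and q n :: nat and \<omega> :: 'a
  assumes "is_subfield F" and "card F = q" and "card (UNIV :: 'a set) = q ^ n"
  shows "\<exists>k. card (gen_subfield F \<omega>) = q ^ k \<and> k dvd n \<and>
    (\<exists>S0. is_subplane_over (gen_subfield F \<omega>) S0 \<and> secant (gen_subfield F \<omega>) S0 \<and>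
          pi_omega0 F \<omega> \<subseteq> S0 \<and>
          (\<forall>K j S. is_subfield K \<and> card K = q ^ j \<and> j dvd n \<and>
                   is_subplane_over K S \<and> secant K S \<and> pi_omega0 F \<omega> \<subseteq> S
                   \<longrightarrow> S0 \<subseteq> S))"
proof -
  define L where "L = gen_subfield F \<omega>"
  have F: "is_subfield F" by fact
  have Ls: "is_subfield L" "F \<subseteq> L" "\<omega> \<in> L" unfolding L_def using gen_props[OF F] by auto
  have Lmin: "\<And>K. is_subfield K \<Longrightarrow> F \<subseteq> K \<Longrightarrow> \<omega> \<in> K \<Longrightarrow> L \<subseteq> K"
    unfolding L_def using gen_props[OF F] by auto
  have "kclosed F L" unfolding kclosed_def using Ls sf_0 sf_add sf_mult by blast
  then obtain k where k: "card L = q ^ k" using count_sub[OF F] assms(2) by blast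
  have "kclosed L UNIV" unfolding kclosed_def by simp
  then obtain m where m: "card (UNIV::'a set) = card L ^ m" using count_sub[OF Ls(1)] by blast
  have q2: "q \<ge> 2" using card_ge2[OF F] assms(2) by simp
  have "q ^ n = q ^ (k * m)" using assms(3) m k by (simp add: power_mult)
  hence "n = k * m" using q2 by (simp add: power_inject_exp)
  hence kdvd: "k dvd n" by simp
  let ?e1 = "(1,0,0) :: 'a vec3" and ?v2 = "(0,1,\<omega>) :: 'a vec3" and ?e3 = "(0,0,1) :: 'a vec3"
  define S0 where "S0 = subplane L ?e1 ?v2 ?e3"
  have S0a: "is_subplane_over L S0" unfolding S0_def is_subplane_over_def using li_e by blast
  have S0b: "secant L S0" unfolding S0_def by (rule secant_e[OF Ls(1) Ls(3)])
  have S0c: "pi_omega0 F \<omega> \<subseteq> S0" unfolding S0_def by (rule pi_sub[OF Ls(2)])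
  have S0d: "S0 \<subseteq> S" if hK: "is_subfield K" "is_subplane_over K S" "secant K S" "pi_omega0 F \<omega> \<subseteq> S"
    for K S
  proof -
    obtain u v z where uvz: "lin_indep3 u v z" "S = subplane K u v z"
      using hK(2) unfolding is_subplane_over_def by blast
    have F01: "0 \<in> F" "1 \<in> F" using F by (simp_all add: sf_closed)
    have p1: "pt ?e1 \<in> S" using pi_mem[of 1 F 0 0 \<omega>] F01 hK(4) by auto
    have p2: "pt ?v2 \<in> S" using pi_mem[of 0 F 0 1 \<omega>] F01 hK(4) by auto
    have p3: "pt ?e3 \<in> S" using pi_mem[of 0 F 1 0 \<omega>] F01 hK(4) by auto
    have n111: "(1::'a,1::'a,1::'a) \<noteq> (0,0,0)" by simp
    have "pt (1,1,1*\<omega>+1) \<in> S" using pi_mem[of 1 F 1 1 \<omega>] F01 hK(4) n111 by blast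
    hence p4: "pt (lc ?e1 ?v2 ?e3 (1,1,1)) \<in> S" unfolding lc_e by simp
    have dne: "det3 ?e1 ?v2 ?e3 \<noteq> 0" by (simp add: det_e)
    have SE: "S = subplane K ?e1 ?v2 ?e3"
      using frame[OF hK(1) uvz(1) dne p1[unfolded uvz(2)] p2[unfolded uvz(2)] p3[unfolded uvz(2)]
          p4[unfolded uvz(2)]] uvz(2) by simp
    have FK: "F \<subseteq> K"
    proof
      fix f assume f: "f \<in> F"
      have "pt (f,0,0*\<omega>+1) \<in> S" using pi_mem[of f F 1 0 \<omega>] F01 f hK(4) by auto
      hence "pt (f,0,1) \<in> subplane K ?e1 ?v2 ?e3" using SE by simp
      then obtain s t w where h: "pt (f,0,1) = pt (s, t, t*\<omega> + w)" "s \<in> K" "t \<in> K" "w \<in> K"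
        unfolding S_e by blast
      have "(f,0::'a,1::'a) \<noteq> (0,0,0)" by simp
      with pt_eq[OF h(1)] obtain c where c: "c \<noteq> 0" "(f,0,1) = vsmult c (s, t, t*\<omega> + w)" by blast
      have e1: "f = c * s" and e2: "c * t = 0" and e3: "c * (t*\<omega> + w) = 1"
        using c(2) by (auto simp: vsmult_def)
      have t0: "t = 0" using e2 c(1) by simp
      have cw: "c * w = 1" using e3 unfolding t0 by simp
      hence "w \<noteq> 0" by auto
      hence "c = 1 / w" using cw by (simp add: field_simps)
      hence "f = s / w" using e1 by simp
      thus "f \<in> K" using sf_div[OF hK(1) h(2) h(4)] by simp
    qed
    have wK: "\<omega> \<in> K"
    proof (rule ccontr)
      assume nw: "\<omega> \<notin> K"
      have sub: "S \<inter> l_inf \<subseteq> {pt ?e1}"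
      proof
        fix P assume PP: "P \<in> S \<inter> l_inf"
        hence "P \<in> subplane K ?e1 ?v2 ?e3" using SE by blast
        then obtain s t w where h: "P = pt (s, t, t*\<omega> + w)" "s \<in> K" "t \<in> K" "w \<in> K" "(s,t,w) \<noteq> (0,0,0)"
          unfolding S_e by blast
        have nz: "(s, t, t*\<omega> + w) \<noteq> (0,0,0)" using h(5) by auto
        have z: "t*\<omega> + w = 0" using linf_iff[OF nz] h(1) PP by simp
        have t0: "t = 0"
        proof (rule ccontr)
          assume "t \<noteq> 0"
          hence "\<omega> = - w / t" using z by (simp add: field_simps add_eq_0_iff)
          thus False using nw sf_div[OF hK(1) sf_uminus[OF hK(1) h(4)] h(3)] by simp
        qed
        hence "w = 0" "s \<noteq> 0" using z h(5) by auto
        hence "(s, t, t*\<omega> + w) = vsmult s ?e1" using t0 by (simp add: vsmult_def)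
        thus "P \<in> {pt ?e1}" using h(1) pt_smult[OF \<open>s \<noteq> 0\<close>] by simp
      qed
      have "card (S \<inter> l_inf) \<le> card {pt ?e1}" by (rule card_mono[OF _ sub]) simp
      moreover have "card (S \<inter> l_inf) = card K + 1" using hK(3) unfolding secant_def .
      moreover have "card K \<ge> 2" using card_ge2[OF hK(1)] .
      ultimately show False by simp
    qed
    have "L \<subseteq> K" using Lmin[OF hK(1) FK wK] .
    thus "S0 \<subseteq> S" unfolding S0_def SE by (rule subplane_mono)
  qed
  show ?thesis unfolding L_def[symmetric]
    using k kdvd S0a S0b S0c S0d by blast
qed

end
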